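(* Let $\alpha,\beta\ge0$ with $b=\alpha+\beta\le n$, and let $\mathbf{s}=(s_1,\dots,s_k)$ be a switch pattern. Then $$f_{\alpha,\beta,\mathbf{s}}=\frac1{2^b}\sum_{j=0}^b\binom bj a_{\alpha,\beta}(j)\lambda_{n,j,\mathbf{s}},$$ where $a_{\alpha,0}(j)=1$ for all $\alpha\ge0$ and all $j$, and $$a_{\alpha,\beta}(j)=\frac{b-j}{b}a_{\alpha,\beta-1}(j)-\frac jb a_{\alpha,\beta-1}(j-1)\quad\text{for all }\alpha\ge0,\ \beta\ge1.$$
   Context: Lightbulb process on $n$ bulbs with $k$ stages and switch pattern $\mathbf{s}=(s_1,\dots,s_k)$: the initial (stage $0$) status $X_{0j}\in\{0,1\}$ of each bulb is given deterministically; at stage $r$ a uniformly random subset of exactly $s_r$ bulbs is toggled, independently across stages; $X_{rj}=1$ iff bulb $j$ is toggled at stage $r$, and $X_j=(\sum_{r=0}^kX_{rj})\bmod2$ is the indicator that bulb $j$ is on at the terminal time. Define $f_{\alpha,\beta,\mathbf{s}}=P(X_i=0,\ i=1,\dots,\alpha+\beta\mid X_{0i}=0,\ i=1,\dots,\alpha;\ X_{0i}=1,\ i=\alpha+1,\dots,\alpha+\beta)$. With $(n)_t=n(n-1)\cdots(n-t+1)$, $\lambda_{n,j,s}=\sum_{t=0}^j\binom jt(-2)^t\frac{(s)_t}{(n)_t}$ and $\lambda_{n,j,\mathbf{s}}=\prod_{r=1}^k\lambda_{n,j,s_r}$ (empty product $1$). In the recursion, values $a(-1)$ and $a(b)$ only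 appear multiplied by zero. *)

theory Defs
  imports "HOL-Probability.Probability"
begin

text \<open>An outcome of the k toggling stages is a list Ss of length k whose r-th entry
  is the set of bulbs toggled at stage r+1 (a subset of {1..n} of size s!r).
  Independent uniform choices at each stage = uniform distribution on all such lists.\<close>

definition stage_outcomes :: "nat \<Rightarrow> nat list \<Rightarrow> nat set list set" where
  "stage_outcomes n s = {Ss. length Ss = length s \<and>
      (\<forall>r<length s. Ss ! r \<subseteq> {1..n} \<and> card (Ss ! r) = s ! r)}"

definition stage_pmf :: "nat \<Rightarrow> nat list \<Rightarrow> nat set list pmf" where
  "stage_pmf n s = pmf_of_set (stage_outcomes n s)"

definition terminal_status :: "(nat \<Rightarrow> nat) \<Rightarrow> nat set list \<Rightarrow> nat \<Rightarrow> nat" where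
  "terminal_status x0 Ss j = (x0 j + card {r. r < length Ss \<and> j \<in> Ss ! r}) mod 2"

text \<open>Initial statuses: bulbs 1..alpha off, bulbs alpha+1..alpha+beta on
  (the remaining bulbs are irrelevant to the event; set them off).\<close>
definition init_status :: "nat \<Rightarrow> nat \<Rightarrow> nat \<Rightarrow> nat" where
  "init_status \<alpha> \<beta> j = (if \<alpha> < j \<and> j \<le> \<alpha> + \<beta> then 1 else 0)"

definition f_prob :: "nat \<Rightarrow> nat \<Rightarrow> nat \<Rightarrow> nat list \<Rightarrow> real" where
  "f_prob n \<alpha> \<beta> s = measure_pmf.prob (stage_pmf n s)
     {Ss. \<forall>i\<in>{1..\<alpha>+\<beta>}. terminal_status (init_status \<alpha> \<beta>) Ss i = 0}"

definition falling :: "nat \<Rightarrow> nat \<Rightarrow> real" where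
  "falling n t = (\<Prod>i<t. real n - real i)"

definition lam1 :: "nat \<Rightarrow> nat \<Rightarrow> nat \<Rightarrow> real" where
  "lam1 n j s = (\<Sum>t=0..j. real (j choose t) * (-2) ^ t * falling s t / falling n t)"

definition lam :: "nat \<Rightarrow> nat \<Rightarrow> nat list \<Rightarrow> real" where
  "lam n j s = (\<Prod>r<length s. lam1 n j (s ! r))"

text \<open>a_{alpha,beta}(j); for j = 0 the term a(j-1) is multiplied by j/b = 0.\<close>
fun a_coef :: "nat \<Rightarrow> nat \<Rightarrow> nat \<Rightarrow> real" where
  "a_coef \<alpha> 0 j = 1"
| "a_coef \<alpha> (Suc \<beta>) j =
     (real (\<alpha> + Suc \<beta>) - real j) / real (\<alpha> + Suc \<beta>) * a_coef \<alpha> \<beta> j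
     - real j / real (\<alpha> + Suc \<beta>) * a_coef \<alpha> \<beta> (j - 1)"

end

theory Submission
  imports Defs
begin


lemma sum_pow_card:
  assumes "finite A"
  shows "(\<Sum>T\<in>Pow A. h (card T)) = (\<Sum>t=0..card A. real (card A choose t) * h t)"
proof -
  have "(\<Sum>T\<in>Pow A. h (card T)) = (\<Sum>t\<in>{0..card A}. \<Sum>T\<in>{T\<in>Pow A. card T = t}. h (card T))"
    by (rule sum.group[symmetric]) (use assms card_mono in \<open>auto\<close>)
  also have "\<dots> = (\<Sum>t=0..card A. real (card A choose t) * h t)"
  proof (rule sum.cong)
    fix t assume "t \<in> {0..card A}"
    have "{T\<in>Pow A. card T = t} = {B. B \<subseteq> A \<and> card B = t}" by auto
    then have "card {T\<in>Pow A. card T = t} = card A choose t" using n_subsets[OF assms] by simp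
    moreover have "(\<Sum>T\<in>{T\<in>Pow A. card T = t}. h (card T)) = (\<Sum>T\<in>{T\<in>Pow A. card T = t}. h t)"
      by (rule sum.cong) auto
    ultimately show "(\<Sum>T\<in>{T\<in>Pow A. card T = t}. h (card T)) = real (card A choose t) * h t"
      by simp
  qed simp
  finally show ?thesis .
qed

lemma coef_rec:
  "real ((\<alpha> + Suc \<beta>) choose j) * a_coef \<alpha> (Suc \<beta>) j =
     real ((\<alpha> + \<beta>) choose j) * a_coef \<alpha> \<beta> j
     - (if j = 0 then 0 else real ((\<alpha> + \<beta>) choose (j - 1)) * a_coef \<alpha> \<beta> (j - 1))"
proof -
  define b where "b = \<alpha> + Suc \<beta>"
  have bpos: "real b > 0" unfolding b_def by simp
  have bm: "b - 1 = \<alpha> + \<beta>" unfolding b_def by simp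
  have e1: "real (b choose j) * ((real b - real j) / real b) = real ((\<alpha>+\<beta>) choose j)"
  proof (cases "j \<le> b")
    case True
    have "(b - j) * (b choose j) = b * ((b - 1) choose j)" by (rule binomial_absorb_comp)
    then have "(real b - real j) * real (b choose j) = real b * real ((b-1) choose j)"
      using True by (metis of_nat_diff of_nat_mult)
    then show ?thesis using bpos bm by (simp add: field_simps)
  next
    case False
    then have "\<alpha> + \<beta> < j" using bm by simp
    then show ?thesis using False by (simp add: binomial_eq_0)
  qed
  have e2: "j \<noteq> 0 \<Longrightarrow> real (b choose j) * (real j / real b) = real ((\<alpha>+\<beta>) choose (j-1))"
  proof -
    assume "j \<noteq> 0"
    then obtain k where k: "j = Suc k" by (cases j) auto
    have "Suc k * (b choose Suc k) = b * ((b - 1) choose k)" by (rule binomial_absorption)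
    then have "real (Suc k) * real (b choose Suc k) = real b * real ((b-1) choose k)"
      by (metis of_nat_mult)
    then show ?thesis using bpos bm k by (simp add: field_simps)
  qed
  have "real (b choose j) * a_coef \<alpha> (Suc \<beta>) j =
     (real (b choose j) * ((real b - real j) / real b)) * a_coef \<alpha> \<beta> j
     - (real (b choose j) * (real j / real b)) * a_coef \<alpha> \<beta> (j - 1)"
    unfolding a_coef.simps b_def[symmetric] by (simp add: algebra_simps)
  also have "\<dots> = real ((\<alpha> + \<beta>) choose j) * a_coef \<alpha> \<beta> j
     - (if j = 0 then 0 else real ((\<alpha> + \<beta>) choose (j - 1)) * a_coef \<alpha> \<beta> (j - 1))"
    using e1 e2 by (cases "j = 0") simp_all
  finally show ?thesis unfolding b_def .
qed


lemma kraw: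
  "(\<Sum>A\<in>Pow {1..\<alpha>+\<beta>}. (-1::real) ^ card (A \<inter> {i. \<alpha> < i \<and> i \<le> \<alpha>+\<beta>}) * h (card A))
     = (\<Sum>j=0..\<alpha>+\<beta>. real ((\<alpha>+\<beta>) choose j) * a_coef \<alpha> \<beta> j * h j)"
proof (induction \<beta> arbitrary: h)
  case 0
  have e: "{i. \<alpha> < i \<and> i \<le> \<alpha>+0} = {}" by auto
  show ?case unfolding e using sum_pow_card[of "{1..\<alpha>}" h] by simp
next
  case (Suc \<beta>)
  define b where "b = \<alpha> + Suc \<beta>"
  define I where "I = {1..\<alpha>+\<beta>}"
  define B where "B = {i. \<alpha> < i \<and> i \<le> \<alpha>+\<beta>}"
  define B' where "B' = {i. \<alpha> < i \<and> i \<le> \<alpha>+Suc \<beta>}"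
  define c where "c j = real ((\<alpha>+\<beta>) choose j) * a_coef \<alpha> \<beta> j" for j
  have bI: "b \<notin> I" unfolding b_def I_def by auto
  have fI: "finite I" unfolding I_def by simp
  have ins: "{1..\<alpha>+Suc \<beta>} = insert b I" unfolding b_def I_def by auto
  have "(\<Sum>A\<in>Pow {1..\<alpha>+Suc \<beta>}. (-1::real) ^ card (A \<inter> B') * h (card A))
      = (\<Sum>A\<in>Pow I. (-1::real) ^ card (A \<inter> B') * h (card A))
        + (\<Sum>A\<in>insert b ` Pow I. (-1::real) ^ card (A \<inter> B') * h (card A))"
    unfolding ins Pow_insert by (rule sum.union_disjoint) (use bI fI in auto)
  also have "(\<Sum>A\<in>Pow I. (-1::real) ^ card (A \<inter> B') * h (card A))
      = (\<Sum>A\<in>Pow I. (-1::real) ^ card (A \<inter> B) * h (card A))"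
  proof (rule sum.cong)
    fix A assume "A \<in> Pow I"
    then have "A \<inter> B' = A \<inter> B" unfolding I_def B_def B'_def by auto
    then show "(-1::real) ^ card (A \<inter> B') * h (card A) = (-1::real) ^ card (A \<inter> B) * h (card A)" by simp
  qed simp
  also have "\<dots> = (\<Sum>j=0..\<alpha>+\<beta>. c j * h j)" using Suc.IH[of h] unfolding I_def B_def c_def by simp
  also have "(\<Sum>A\<in>insert b ` Pow I. (-1::real) ^ card (A \<inter> B') * h (card A))
      = (\<Sum>A\<in>Pow I. (-1::real) ^ card (insert b A \<inter> B') * h (card (insert b A)))"
  proof (rule sum.reindex[unfolded comp_def])
    show "inj_on (insert b) (Pow I)" using bI unfolding inj_on_def
      by (metis Diff_insert_absorb PowD in_mono)
  qed
  also have "\<dots> = (\<Sum>A\<in>Pow I. - ((-1::real) ^ card (A \<inter> B) * h (Suc (card A))))"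
  proof (rule sum.cong)
    fix A assume A: "A \<in> Pow I"
    then have bA: "b \<notin> A" using bI by auto
    have "insert b A \<inter> B' = insert b (A \<inter> B)" using A unfolding I_def B_def B'_def b_def by auto
    moreover have "finite A" using A fI finite_subset by auto
    ultimately have "card (insert b A \<inter> B') = Suc (card (A \<inter> B))" using bA by simp
    moreover have "card (insert b A) = Suc (card A)" using bA \<open>finite A\<close> by simp
    ultimately show "(-1::real) ^ card (insert b A \<inter> B') * h (card (insert b A)) = - ((-1::real) ^ card (A \<inter> B) * h (Suc (card A)))" by simp
  qed simp
  also have "\<dots> = - (\<Sum>j=0..\<alpha>+\<beta>. c j * h (Suc j))"
    using Suc.IH[of "\<lambda>j. h (Suc j)"] unfolding I_def B_def c_def by (simp add: sum_negf)
  also have "(\<Sum>j=0..\<alpha>+\<beta>. c j * h j) + - (\<Sum>j=0..\<alpha>+\<beta>. c j * h (Suc j))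
      = (\<Sum>j=0..\<alpha>+Suc \<beta>. real ((\<alpha>+Suc \<beta>) choose j) * a_coef \<alpha> (Suc \<beta>) j * h j)"
  proof -
    have z: "c (Suc (\<alpha>+\<beta>)) = 0" unfolding c_def by simp
    have "(\<Sum>j=0..\<alpha>+Suc \<beta>. real ((\<alpha>+Suc \<beta>) choose j) * a_coef \<alpha> (Suc \<beta>) j * h j)
       = (\<Sum>j=0..Suc (\<alpha>+\<beta>). c j * h j - (if j = 0 then 0 else c (j - 1)) * h j)"
    proof (rule sum.cong)
      fix j
      show "real ((\<alpha>+Suc \<beta>) choose j) * a_coef \<alpha> (Suc \<beta>) j * h j = c j * h j - (if j = 0 then 0 else c (j - 1)) * h j"
        by (simp only: coef_rec left_diff_distrib c_def)
    qed simp
    also have "\<dots> = (\<Sum>j=0..Suc (\<alpha>+\<beta>). c j * h j) - (\<Sum>j=0..Suc (\<alpha>+\<beta>). (if j = 0 then 0 else c (j - 1)) * h j)"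
      by (rule sum_subtractf)
    also have "(\<Sum>j=0..Suc (\<alpha>+\<beta>). c j * h j) = (\<Sum>j=0..\<alpha>+\<beta>. c j * h j)"
      using z by simp
    also have "(\<Sum>j=0..Suc (\<alpha>+\<beta>). (if j = 0 then 0 else c (j - 1)) * h j) = (\<Sum>j=0..\<alpha>+\<beta>. c j * h (Suc j))"
      by (subst sum.atLeast0_atMost_Suc_shift) simp
    finally show ?thesis by simp
  qed
  finally show ?case unfolding B'_def .
qed



definition V :: "nat \<Rightarrow> nat \<Rightarrow> nat set set" where
  "V n m = {S. S \<subseteq> {1..n} \<and> card S = m}"

lemma stage_outcomes_Cons:
  "stage_outcomes n (x # s) = (\<lambda>(S, Ss). S # Ss) ` (V n x \<times> stage_outcomes n s)"
proof (intro set_eqI iffI)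
  fix Ss assume a: "Ss \<in> stage_outcomes n (x # s)"
  then obtain S Ss' where Ss: "Ss = S # Ss'" unfolding stage_outcomes_def by (cases Ss) auto
  have "S \<in> V n x" using a unfolding Ss stage_outcomes_def V_def by force
  moreover have "Ss' \<in> stage_outcomes n s" using a unfolding Ss stage_outcomes_def by force
  ultimately show "Ss \<in> (\<lambda>(S, Ss). S # Ss) ` (V n x \<times> stage_outcomes n s)" unfolding Ss by blast
next
  fix Ss assume "Ss \<in> (\<lambda>(S, Ss). S # Ss) ` (V n x \<times> stage_outcomes n s)"
  then obtain S Ss' where Ss: "Ss = S # Ss'" and S: "S \<in> V n x" and Ss': "Ss' \<in> stage_outcomes n s" by auto
  show "Ss \<in> stage_outcomes n (x # s)"
    using S Ss' unfolding Ss stage_outcomes_def V_def by (fastforce simp: less_Suc_eq_0_disj)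
qed

lemma stage_sum_prod:
  "(\<Sum>Ss\<in>stage_outcomes n s. \<Prod>r<length s. G r (Ss ! r)) =
   (\<Prod>r<length s. \<Sum>S\<in>V n (s ! r). (G r S :: real))"
proof (induction s arbitrary: G)
  case Nil
  have "stage_outcomes n [] = {[]}" unfolding stage_outcomes_def by auto
  then show ?case by simp
next
  case (Cons x s)
  have inj: "inj_on (\<lambda>(S, Ss). S # Ss) (V n x \<times> stage_outcomes n s)" by (auto simp: inj_on_def)
  have "(\<Sum>Ss\<in>stage_outcomes n (x#s). \<Prod>r<length (x#s). G r (Ss ! r))
     = (\<Sum>p\<in>V n x \<times> stage_outcomes n s. \<Prod>r<length (x#s). G r ((fst p # snd p) ! r))"
    unfolding stage_outcomes_Cons by (subst sum.reindex[OF inj]) (auto intro!: sum.cong simp: case_prod_beta)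
  also have "\<dots> = (\<Sum>p\<in>V n x \<times> stage_outcomes n s. G 0 (fst p) * (\<Prod>r<length s. G (Suc r) (snd p ! r)))"
    by (rule sum.cong) (simp_all only: length_Cons prod.lessThan_Suc_shift nth_Cons_0 nth_Cons_Suc)
  also have "\<dots> = (\<Sum>S\<in>V n x. \<Sum>Ss\<in>stage_outcomes n s. G 0 S * (\<Prod>r<length s. G (Suc r) (Ss ! r)))"
    using sum.cartesian_product[of "\<lambda>S Ss. G 0 S * (\<Prod>r<length s. G (Suc r) (Ss ! r))" "stage_outcomes n s" "V n x"]
    unfolding case_prod_beta by (rule sym)
  also have "\<dots> = (\<Sum>S\<in>V n x. G 0 S) * (\<Sum>Ss\<in>stage_outcomes n s. (\<Prod>r<length s. G (Suc r) (Ss ! r)))"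
    by (rule sum_product[symmetric])
  also have "\<dots> = (\<Sum>S\<in>V n x. G 0 S) * (\<Prod>r<length s. \<Sum>S\<in>V n (s ! r). G (Suc r) S)"
    using Cons.IH[of "\<lambda>r. G (Suc r)"] by simp
  also have "\<dots> = (\<Prod>r<length (x#s). \<Sum>S\<in>V n ((x#s) ! r). G r S)"
    by (simp only: length_Cons prod.lessThan_Suc_shift nth_Cons_0 nth_Cons_Suc)
  finally show ?case .
qed

lemma prod_sign:
  assumes "finite X"
  shows "(\<Prod>x\<in>X. if P x then (-1::real) else 1) = (-1) ^ card {x\<in>X. P x}"
proof -
  have "(\<Prod>x\<in>X. if P x then (-1::real) else 1) = (\<Prod>x\<in>X \<inter> {x. P x}. -1) * (\<Prod>x\<in>X \<inter> - {x. P x}. 1)"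
    by (rule prod.If_cases[OF assms])
  also have "X \<inter> {x. P x} = {x\<in>X. P x}" by auto
  finally show ?thesis by simp
qed

lemma falling_fact: "t \<le> n \<Longrightarrow> falling n t * fact (n - t) = fact n"
proof (induction t)
  case 0 then show ?case by (simp add: falling_def)
next
  case (Suc t)
  have e: "n - t = Suc (n - Suc t)" using Suc.prems by simp
  have "falling n (Suc t) * fact (n - Suc t) = falling n t * ((real n - real t) * fact (n - Suc t))"
    by (simp add: falling_def)
  also have "(real n - real t) * fact (n - Suc t) = (fact (n - t) :: real)"
    unfolding e using Suc.prems by (simp add: of_nat_diff)
  finally show ?case using Suc by simp
qed

lemma falling_zero: "m < t \<Longrightarrow> falling m t = 0"
  unfolding falling_def by (rule prod_zero) auto

lemma count_sup:
  assumes T: "T \<subseteq> {1..n}" and m: "m \<le> n"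
  shows "real (card {S\<in>V n m. T \<subseteq> S}) = real (n choose m) * falling m (card T) / falling n (card T)"
proof -
  have fT: "finite T" using T finite_subset by blast
  have tn: "card T \<le> n" using card_mono[OF _ T] by simp
  define t where "t = card T"
  have fn: "falling n t \<noteq> 0"
    using falling_fact[of t n] tn unfolding t_def by auto
  show ?thesis
  proof (cases "t \<le> m")
    case False
    have e: "{S\<in>V n m. T \<subseteq> S} = {}"
    proof (rule ccontr)
      assume "{S\<in>V n m. T \<subseteq> S} \<noteq> {}"
      then obtain S where "S \<subseteq> {1..n}" "card S = m" "T \<subseteq> S" unfolding V_def by auto
      then have "t \<le> m" unfolding t_def by (metis card_mono finite_atLeastAtMost finite_subset)
      then show False using False by simp
    qed
    show ?thesis unfolding e using falling_zero[of m t] False unfolding t_def by simp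
  next
    case True
    have eq: "{S\<in>V n m. T \<subseteq> S} = (\<lambda>X. X \<union> T) ` {X. X \<subseteq> {1..n} - T \<and> card X = m - t}"
    proof (intro set_eqI iffI)
      fix S assume S: "S \<in> {S\<in>V n m. T \<subseteq> S}"
      then have fS: "finite S" unfolding V_def using finite_subset by auto
      have "card (S - T) = m - t" using S fT card_Diff_subset[of T S] unfolding V_def t_def by auto
      moreover have "S = (S - T) \<union> T" using S by auto
      ultimately show "S \<in> (\<lambda>X. X \<union> T) ` {X. X \<subseteq> {1..n} - T \<and> card X = m - t}"
        using S unfolding V_def by blast
    next
      fix S assume "S \<in> (\<lambda>X. X \<union> T) ` {X. X \<subseteq> {1..n} - T \<and> card X = m - t}"
      then obtain X where S: "S = X \<union> T" and X: "X \<subseteq> {1..n} - T" "card X = m - t" by blast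
      have fX: "finite X" using X(1) finite_subset by blast
      have "X \<inter> T = {}" using X by auto
      then have "card S = m - t + t" unfolding S using card_Un_disjoint[OF fX fT] X t_def by simp
      then show "S \<in> {S\<in>V n m. T \<subseteq> S}" unfolding V_def S using X T True by auto
    qed
    have inj: "inj_on (\<lambda>X. X \<union> T) {X. X \<subseteq> {1..n} - T \<and> card X = m - t}"
      unfolding inj_on_def by blast
    have cd: "card ({1..n} - T) = n - t" using T fT unfolding t_def by (simp add: card_Diff_subset)
    have c: "card {S\<in>V n m. T \<subseteq> S} = (n - t) choose (m - t)"
      unfolding eq card_image[OF inj] using n_subsets[of "{1..n} - T" "m - t"] cd by simp
    have tn': "t \<le> n" using True m by simp
    have f1: "falling n t = fact n / fact (n - t)" using falling_fact[OF tn'] by (simp add: field_simps)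
    have f2: "falling m t = fact m / fact (m - t)" using falling_fact[OF True] by (simp add: field_simps)
    have b1: "real (n choose m) = fact n / (fact m * fact (n - m))" using binomial_fact[OF m] by simp
    have b2: "real ((n - t) choose (m - t)) = fact (n - t) / (fact (m - t) * fact (n - m))"
      using binomial_fact[where 'a=real, of "m - t" "n - t"] m True by simp
    show ?thesis unfolding c t_def[symmetric] f1 f2 b1 b2 by (simp add: field_simps)
  qed
qed



lemma finite_V: "finite (V n m)"
  unfolding V_def by (rule finite_subset[of _ "Pow {1..n}"]) auto

lemma sign_expand:
  assumes "finite A"
  shows "(-1::real) ^ card (A \<inter> S) = (\<Sum>T\<in>Pow A. if T \<subseteq> S then (-2) ^ card T else 0)"
proof -
  have "(-1::real) ^ card (A \<inter> S) = (\<Prod>i\<in>A. if i \<in> S then (-1::real) else 1)"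
    using prod_sign[OF assms, of "\<lambda>i. i \<in> S"] by (simp add: Int_def conj_commute)
  also have "\<dots> = (\<Prod>i\<in>A. (if i \<in> S then (-2::real) else 0) + 1)"
    by (rule prod.cong) auto
  also have "\<dots> = (\<Sum>T\<in>Pow A. (\<Prod>i\<in>T. if i \<in> S then (-2::real) else 0) * (\<Prod>i\<in>A-T. 1))"
    by (rule prod_add[OF assms])
  also have "\<dots> = (\<Sum>T\<in>Pow A. if T \<subseteq> S then (-2) ^ card T else 0)"
  proof (rule sum.cong)
    fix T assume "T \<in> Pow A"
    then have fT: "finite T" using assms finite_subset by auto
    show "(\<Prod>i\<in>T. if i \<in> S then (-2::real) else 0) * (\<Prod>i\<in>A-T. 1) = (if T \<subseteq> S then (-2) ^ card T else 0)"
    proof (cases "T \<subseteq> S")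
      case True
      then have "(\<Prod>i\<in>T. if i \<in> S then (-2::real) else 0) = (\<Prod>i\<in>T. -2)"
        by (intro prod.cong) auto
      then show ?thesis using True by simp
    next
      case False
      then obtain i where "i \<in> T" "i \<notin> S" by auto
      then have "(\<Prod>i\<in>T. if i \<in> S then (-2::real) else 0) = 0"
        using fT by (intro prod_zero) auto
      then show ?thesis using False by simp
    qed
  qed simp
  finally show ?thesis .
qed

lemma stage_sign:
  assumes A: "A \<subseteq> {1..n}" and m: "m \<le> n"
  shows "(\<Sum>S\<in>V n m. (-1::real) ^ card (A \<inter> S)) = real (n choose m) * lam1 n (card A) m"
proof -
  have fA: "finite A" using A finite_subset by blast
  have "(\<Sum>S\<in>V n m. (-1::real) ^ card (A \<inter> S))
      = (\<Sum>S\<in>V n m. \<Sum>T\<in>Pow A. if T \<subseteq> S then (-2) ^ card T else 0)"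
    using sign_expand[OF fA] by simp
  also have "\<dots> = (\<Sum>T\<in>Pow A. \<Sum>S\<in>V n m. if T \<subseteq> S then (-2) ^ card T else 0)"
    by (rule sum.swap)
  also have "\<dots> = (\<Sum>T\<in>Pow A. (-2) ^ card T * (real (n choose m) * falling m (card T) / falling n (card T)))"
  proof (rule sum.cong)
    fix T assume T: "T \<in> Pow A"
    have "(\<Sum>S\<in>V n m. if T \<subseteq> S then (-2::real) ^ card T else 0) = (\<Sum>S\<in>{S\<in>V n m. T \<subseteq> S}. (-2::real) ^ card T)"
      by (rule sum.inter_filter[OF finite_V, symmetric])
    also have "\<dots> = (-2) ^ card T * real (card {S\<in>V n m. T \<subseteq> S})" by simp
    also have "\<dots> = (-2) ^ card T * (real (n choose m) * falling m (card T) / falling n (card T))"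
      using count_sup[of T n m] T A m by auto
    finally show "(\<Sum>S\<in>V n m. if T \<subseteq> S then (-2::real) ^ card T else 0) = (-2) ^ card T * (real (n choose m) * falling m (card T) / falling n (card T))" .
  qed simp
  also have "\<dots> = (\<Sum>t=0..card A. real (card A choose t) * ((-2) ^ t * (real (n choose m) * falling m t / falling n t)))"
    by (rule sum_pow_card[OF fA])
  also have "\<dots> = real (n choose m) * lam1 n (card A) m"
    unfolding lam1_def sum_distrib_left by (rule sum.cong) (simp_all add: algebra_simps)
  finally show ?thesis .
qed



lemma card_V: "card (V n m) = n choose m"
  unfolding V_def using n_subsets[of "{1..n}" m] by simp

lemma sign_prod_lists:
  assumes fA: "finite A" and L: "length Ss = L"
  shows "(\<Prod>i\<in>A. (-1::real) ^ (init_status \<alpha> \<beta> i + card {r. r < length Ss \<and> i \<in> Ss ! r}))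
    = (-1) ^ card (A \<inter> {i. \<alpha> < i \<and> i \<le> \<alpha>+\<beta>}) * (\<Prod>r<L. (-1) ^ card (A \<inter> Ss ! r))"
proof -
  have "(\<Prod>i\<in>A. (-1::real) ^ (init_status \<alpha> \<beta> i + card {r. r < length Ss \<and> i \<in> Ss ! r}))
     = (\<Prod>i\<in>A. (-1::real) ^ init_status \<alpha> \<beta> i) * (\<Prod>i\<in>A. (-1::real) ^ card {r. r < length Ss \<and> i \<in> Ss ! r})"
    by (simp add: power_add prod.distrib)
  also have "(\<Prod>i\<in>A. (-1::real) ^ init_status \<alpha> \<beta> i) = (\<Prod>i\<in>A. if i \<in> {i. \<alpha> < i \<and> i \<le> \<alpha>+\<beta>} then -1 else 1)"
    by (rule prod.cong) (auto simp: init_status_def)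
  also have "\<dots> = (-1) ^ card (A \<inter> {i. \<alpha> < i \<and> i \<le> \<alpha>+\<beta>})"
    using prod_sign[OF fA, of "\<lambda>i. i \<in> {i. \<alpha> < i \<and> i \<le> \<alpha>+\<beta>}"] by (simp add: Int_def)
  also have "(\<Prod>i\<in>A. (-1::real) ^ card {r. r < length Ss \<and> i \<in> Ss ! r})
      = (\<Prod>i\<in>A. \<Prod>r<L. if i \<in> Ss ! r then -1 else 1)"
  proof (rule prod.cong)
    fix i
    have "{r. r < length Ss \<and> i \<in> Ss ! r} = {r\<in>{..<L}. i \<in> Ss ! r}" using L by auto
    then show "(-1::real) ^ card {r. r < length Ss \<and> i \<in> Ss ! r} = (\<Prod>r<L. if i \<in> Ss ! r then -1 else 1)"
      using prod_sign[of "{..<L}" "\<lambda>r. i \<in> Ss ! r"] by simp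
  qed simp
  also have "\<dots> = (\<Prod>r<L. \<Prod>i\<in>A. if i \<in> Ss ! r then -1 else 1)"
    by (rule prod.swap)
  also have "\<dots> = (\<Prod>r<L. (-1) ^ card (A \<inter> Ss ! r))"
    using prod_sign[OF fA] by (simp add: Int_def)
  finally show ?thesis .
qed

lemma indicator_expand:
  assumes L: "length Ss = L"
  shows "(if (\<forall>i\<in>{1..\<alpha>+\<beta>}. terminal_status (init_status \<alpha> \<beta>) Ss i = 0) then 1 else 0 :: real)
    = 1 / 2 ^ (\<alpha>+\<beta>) * (\<Sum>A\<in>Pow {1..\<alpha>+\<beta>}. (-1) ^ card (A \<inter> {i. \<alpha> < i \<and> i \<le> \<alpha>+\<beta>}) * (\<Prod>r<L. (-1) ^ card (A \<inter> Ss ! r)))"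
proof -
  define I where "I = {1..\<alpha>+\<beta>}"
  define y where "y i = (-1::real) ^ (init_status \<alpha> \<beta> i + card {r. r < length Ss \<and> i \<in> Ss ! r})" for i
  define P where "P i = even (init_status \<alpha> \<beta> i + card {r. r < length Ss \<and> i \<in> Ss ! r})" for i
  have fI: "finite I" unfolding I_def by simp
  have cI: "card I = \<alpha>+\<beta>" unfolding I_def by simp
  have tP: "terminal_status (init_status \<alpha> \<beta>) Ss i = 0 \<longleftrightarrow> P i" for i
    unfolding terminal_status_def P_def by presburger
  have yP: "(y i + 1) / 2 = (if P i then 1 else 0)" for i
    unfolding y_def P_def by auto
  have "(if (\<forall>i\<in>I. P i) then 1 else 0 :: real) = (\<Prod>i\<in>I. if P i then 1 else 0)"
  proof (cases "\<forall>i\<in>I. P i")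
    case True then show ?thesis by simp
  next
    case False
    then obtain i where "i \<in> I" "\<not> P i" by auto
    then have "(\<Prod>i\<in>I. if P i then 1 else 0 :: real) = 0" using fI by (intro prod_zero) auto
    then show ?thesis using False by simp
  qed
  also have "\<dots> = (\<Prod>i\<in>I. (y i + 1) / 2)" by (simp add: yP)
  also have "\<dots> = (\<Prod>i\<in>I. y i + 1) / 2 ^ (\<alpha>+\<beta>)"
    by (simp add: prod_dividef cI)
  also have "(\<Prod>i\<in>I. y i + 1) = (\<Sum>A\<in>Pow I. (\<Prod>i\<in>A. y i) * (\<Prod>i\<in>I-A. 1))"
    by (rule prod_add[OF fI])
  also have "\<dots> = (\<Sum>A\<in>Pow I. (-1) ^ card (A \<inter> {i. \<alpha> < i \<and> i \<le> \<alpha>+\<beta>}) * (\<Prod>r<L. (-1) ^ card (A \<inter> Ss ! r)))"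
  proof (rule sum.cong)
    fix A assume "A \<in> Pow I"
    then have "finite A" using fI finite_subset by auto
    then show "(\<Prod>i\<in>A. y i) * (\<Prod>i\<in>I-A. 1) = (-1) ^ card (A \<inter> {i. \<alpha> < i \<and> i \<le> \<alpha>+\<beta>}) * (\<Prod>r<L. (-1) ^ card (A \<inter> Ss ! r))"
      unfolding y_def using sign_prod_lists[OF _ L] by simp
  qed simp
  finally show ?thesis unfolding I_def[symmetric] using tP by simp
qed



theorem lemma4p4:
  fixes n \<alpha> \<beta> :: nat and s :: "nat list"
  assumes "\<alpha> + \<beta> \<le> n"
    and "\<forall>x\<in>set s. x \<le> n"
  shows "f_prob n \<alpha> \<beta> s =
    1 / 2 ^ (\<alpha> + \<beta>) * (\<Sum>j=0..\<alpha>+\<beta>. real ((\<alpha> + \<beta>) choose j) * a_coef \<alpha> \<beta> j * lam n j s)"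
proof -
  define U where "U = stage_outcomes n s"
  define E where "E = {Ss. \<forall>i\<in>{1..\<alpha>+\<beta>}. terminal_status (init_status \<alpha> \<beta>) Ss i = 0}"
  define B where "B = {i. \<alpha> < i \<and> i \<le> \<alpha>+\<beta>}"
  define L where "L = length s"
  have sr: "s ! r \<le> n" if "r < L" for r using assms(2) that nth_mem unfolding L_def by blast
  have cU: "real (card U) = (\<Prod>r<L. real (n choose s ! r))"
    using stage_sum_prod[where n=n and s=s and G="\<lambda>_ _. 1"] unfolding U_def L_def by (simp add: card_V)
  have cUpos: "real (card U) > 0" unfolding cU using sr by (intro prod_pos) simp
  then have fU: "finite U" and neU: "U \<noteq> {}" using card_gt_0_iff by fastforce+
  have lenU: "length Ss = L" if "Ss \<in> U" for Ss using that unfolding U_def stage_outcomes_def L_def by auto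
  have A_sub: "A \<subseteq> {1..n}" if "A \<in> Pow {1..\<alpha>+\<beta>}" for A using that assms(1) by auto
  have inner: "(\<Sum>Ss\<in>U. \<Prod>r<L. (-1::real) ^ card (A \<inter> Ss ! r)) = real (card U) * lam n (card A) s"
    if "A \<in> Pow {1..\<alpha>+\<beta>}" for A
  proof -
    have "(\<Sum>Ss\<in>U. \<Prod>r<L. (-1::real) ^ card (A \<inter> Ss ! r)) = (\<Prod>r<L. \<Sum>S\<in>V n (s ! r). (-1::real) ^ card (A \<inter> S))"
      using stage_sum_prod[where n=n and s=s and G="\<lambda>r S. (-1::real) ^ card (A \<inter> S)"] unfolding U_def L_def by simp
    also have "\<dots> = (\<Prod>r<L. real (n choose s ! r) * lam1 n (card A) (s ! r))"
      by (rule prod.cong) (use stage_sign[OF A_sub[OF that] sr] in auto)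
    also have "\<dots> = real (card U) * lam n (card A) s"
      unfolding cU lam_def L_def[symmetric] by (rule prod.distrib)
    finally show ?thesis .
  qed
  have "f_prob n \<alpha> \<beta> s = real (card (U \<inter> E)) / real (card U)"
    unfolding f_prob_def stage_pmf_def U_def[symmetric] E_def[symmetric]
    by (rule measure_pmf_of_set[OF neU fU])
  also have "real (card (U \<inter> E)) = (\<Sum>Ss\<in>U. if Ss \<in> E then 1 else 0)"
  proof -
    have "U \<inter> E = {Ss\<in>U. Ss \<in> E}" by auto
    then show ?thesis using sum.inter_filter[OF fU, of "\<lambda>_. (1::real)" "\<lambda>Ss. Ss \<in> E"] by simp
  qed
  also have "\<dots> = (\<Sum>Ss\<in>U. (1::real) / 2 ^ (\<alpha>+\<beta>) * (\<Sum>A\<in>Pow {1..\<alpha>+\<beta>}. (-1) ^ card (A \<inter> B) * (\<Prod>r<L. (-1) ^ card (A \<inter> Ss ! r))))"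
  proof (rule sum.cong)
    fix Ss assume "Ss \<in> U"
    show "(if Ss \<in> E then 1 else 0) = (1::real) / 2 ^ (\<alpha>+\<beta>) * (\<Sum>A\<in>Pow {1..\<alpha>+\<beta>}. (-1) ^ card (A \<inter> B) * (\<Prod>r<L. (-1) ^ card (A \<inter> Ss ! r)))"
      using indicator_expand[OF lenU[OF \<open>Ss \<in> U\<close>], of \<alpha> \<beta>] unfolding E_def B_def by simp
  qed simp
  also have "\<dots> = 1 / 2 ^ (\<alpha>+\<beta>) * (\<Sum>A\<in>Pow {1..\<alpha>+\<beta>}. (-1) ^ card (A \<inter> B) * (\<Sum>Ss\<in>U. \<Prod>r<L. (-1) ^ card (A \<inter> Ss ! r)))"
    by (simp add: sum_distrib_left sum.swap[of _ U])
  also have "\<dots> = 1 / 2 ^ (\<alpha>+\<beta>) * (\<Sum>A\<in>Pow {1..\<alpha>+\<beta>}. (-1) ^ card (A \<inter> B) * (real (card U) * lam n (card A) s))"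
    by (intro arg_cong[where f="\<lambda>x. 1 / 2 ^ (\<alpha>+\<beta>) * x"] sum.cong refl) (simp add: inner)
  also have "\<dots> = real (card U) * (1 / 2 ^ (\<alpha>+\<beta>) * (\<Sum>A\<in>Pow {1..\<alpha>+\<beta>}. (-1) ^ card (A \<inter> B) * lam n (card A) s))"
    by (simp add: sum_distrib_left algebra_simps)
  also have "(\<Sum>A\<in>Pow {1..\<alpha>+\<beta>}. (-1) ^ card (A \<inter> B) * lam n (card A) s)
     = (\<Sum>j=0..\<alpha>+\<beta>. real ((\<alpha>+\<beta>) choose j) * a_coef \<alpha> \<beta> j * lam n j s)"
    unfolding B_def by (rule kraw)
  finally show ?thesis using cUpos by simp
qed

end
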